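(* Let $f\in\mathbb{R}^{d_1\times\cdots\times d_m}$, $f\ge0$, be weakly irreducible, $1<p_1,\ldots,p_m<\infty$, $i\in[m]$ and $\mathbf x,\mathbf y\in\mathcal R^{d-d_i}$ with $0<\mathbf x\le\mathbf y$ and $\mathbf x\ne\mathbf y$. For $\nu\in[m]\setminus\{i\}$ set $J_\nu=\{j_\nu\in[d_\nu]:x_{\nu,j_\nu}=y_{\nu,j_\nu}\}$ and $I_\nu=\{j_\nu\in[d_\nu]:s_{i,\nu,j_\nu}(\mathbf x)=s_{i,\nu,j_\nu}(\mathbf y)\}$; set $J_i=I_i=\{j_i\in[d_i]:\sigma_{i,j_i}(\mathbf x)=\sigma_{i,j_i}(\mathbf y)\}$; and let $J=\bigcup_{\nu\in[m]}\{\nu\}\times J_\nu$, $I=\bigcup_{\nu\in[m]}\{\nu\}\times I_\nu$. Then $I\subset J$, and if $J\ne\emptyset$ then $I\ne J$.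
   Context: $f$ is identified with the multilinear form $f(\mathbf x)=\sum f_{j_1,\ldots,j_m}x_{1,j_1}\cdots x_{m,j_m}$; $\nabla_kf(\mathbf x)$ is the vector of partials $\partial f/\partial x_{k,j_k}$, which does not depend on $\mathbf x_k$, so $\nabla_if(\mathbf x)$ is defined for $\mathbf x\in\mathcal R^{d-d_i}=\prod_{k\ne i}\mathbb{R}^{d_k}$. Inequalities entrywise. $p'=p/(p-1)$; $\psi_q(\mathbf y)_j=|y_j|^{q-1}\mathrm{sign}(y_j)$. For $\mathbf x\in\mathcal R^{d-d_i}$ with $\mathbf x>0$: $\sigma_i(\mathbf x)=\psi_{p_i'}(\nabla_if(\mathbf x))$ with entries $\sigma_{i,j_i}(\mathbf x)$, and for $k\ne i$, $s_{i,k}(\mathbf x)=\psi_{p_k'}\big(\nabla_kf(\mathbf x_1,\ldots,\mathbf x_{i-1},\psi_{p_i'}(\nabla_if(\mathbf x)),\mathbf x_{i+1},\ldots,\mathbf x_m)\big)$ with entries $s_{i,k,j_k}(\mathbf x)$. Weak irreducibility: the undirected graph on $\bigcup_k\{k\}\times[d_k]$ with $(k,j_k)\sim(l,j_l)$ ($k\ne l$) iff $f_{j_1,\ldots,j_m}>0$ for some choice of the remaining indices, is connected. *)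

theory Defs
  imports Complex_Main "HOL-Library.FuncSet"
begin

text \<open>Conventions: modes are indexed 0..m-1, mode k has indices 0..d k - 1.
  A tensor is f :: (nat => nat) => real, evaluated on multi-indices in tidx m d.
  A tuple of vectors is x :: nat => nat => real, x k t being the t-th entry of x_k.\<close>

definition tidx :: "nat \<Rightarrow> (nat \<Rightarrow> nat) \<Rightarrow> (nat \<Rightarrow> nat) set" where
  "tidx m d = PiE {..<m} (\<lambda>k. {..<d k})"

text \<open>Partial gradient of the multilinear form with respect to block k, entry t
  (independent of x k).\<close>
definition mlgrad :: "nat \<Rightarrow> (nat \<Rightarrow> nat) \<Rightarrow> ((nat \<Rightarrow> nat) \<Rightarrow> real) \<Rightarrow> nat
    \<Rightarrow> (nat \<Rightarrow> nat \<Rightarrow> real) \<Rightarrow> nat \<Rightarrow> real" where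
  "mlgrad m d f k x t = (\<Sum>j\<in>{j\<in>tidx m d. j k = t}. f j * (\<Prod>l\<in>{..<m}-{k}. x l (j l)))"

definition hconj :: "real \<Rightarrow> real" where
  "hconj p = p / (p - 1)"

definition psi :: "real \<Rightarrow> real \<Rightarrow> real" where
  "psi q y = \<bar>y\<bar> powr (q - 1) * sgn y"

definition sigma_map :: "nat \<Rightarrow> (nat \<Rightarrow> nat) \<Rightarrow> ((nat \<Rightarrow> nat) \<Rightarrow> real) \<Rightarrow> (nat \<Rightarrow> real)
    \<Rightarrow> nat \<Rightarrow> (nat \<Rightarrow> nat \<Rightarrow> real) \<Rightarrow> nat \<Rightarrow> real" where
  "sigma_map m d f p i x = (\<lambda>t. psi (hconj (p i)) (mlgrad m d f i x t))"

definition s_map :: "nat \<Rightarrow> (nat \<Rightarrow> nat) \<Rightarrow> ((nat \<Rightarrow> nat) \<Rightarrow> real) \<Rightarrow> (nat \<Rightarrow> real)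
    \<Rightarrow> nat \<Rightarrow> nat \<Rightarrow> (nat \<Rightarrow> nat \<Rightarrow> real) \<Rightarrow> nat \<Rightarrow> real" where
  "s_map m d f p i k x = (\<lambda>t. psi (hconj (p k)) (mlgrad m d f k (x(i := sigma_map m d f p i x)) t))"

definition tverts :: "nat \<Rightarrow> (nat \<Rightarrow> nat) \<Rightarrow> (nat \<times> nat) set" where
  "tverts m d = {(k, t). k < m \<and> t < d k}"

definition tedges :: "nat \<Rightarrow> (nat \<Rightarrow> nat) \<Rightarrow> ((nat \<Rightarrow> nat) \<Rightarrow> real) \<Rightarrow> ((nat \<times> nat) \<times> (nat \<times> nat)) set" where
  "tedges m d f = {((k, a), (l, b)). k < m \<and> l < m \<and> k \<noteq> l \<and>
      (\<exists>j\<in>tidx m d. j k = a \<and> j l = b \<and> f j > 0)}"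

definition weakly_irreducible :: "nat \<Rightarrow> (nat \<Rightarrow> nat) \<Rightarrow> ((nat \<Rightarrow> nat) \<Rightarrow> real) \<Rightarrow> bool" where
  "weakly_irreducible m d f \<longleftrightarrow>
     (\<forall>u\<in>tverts m d. \<forall>v\<in>tverts m d. (u, v) \<in> (tedges m d f)\<^sup>*)"

end

theory Submission
  imports Defs
begin

lemma psi_nonneg: "0 \<le> a \<Longrightarrow> psi q a = a powr (q-1)"
  by (cases "a = 0") (auto simp: psi_def)

lemma psi_mono: "1 < q \<Longrightarrow> 0 \<le> a \<Longrightarrow> a \<le> b \<Longrightarrow> psi q a \<le> psi q b"
  by (simp add: psi_nonneg powr_mono2)

lemma psi_inj: "1 < q \<Longrightarrow> 0 \<le> a \<Longrightarrow> 0 \<le> b \<Longrightarrow> psi q a = psi q b \<Longrightarrow> a = b"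
  using powr_less_mono2[of "q-1" a b] powr_less_mono2[of "q-1" b a]
  by (cases a b rule: linorder_cases) (auto simp: psi_nonneg)

lemma hconj_gt1: "1 < p \<Longrightarrow> 1 < hconj p"
  by (simp add: hconj_def)

lemma prod_eq_each:
  fixes u v :: "nat \<Rightarrow> real"
  assumes "finite L" "\<forall>l\<in>L. 0 < u l \<and> u l \<le> v l" "prod u L = prod v L" "l0 \<in> L"
  shows "u l0 = v l0"
proof (rule ccontr)
  assume "u l0 \<noteq> v l0"
  with assms have lt: "u l0 < v l0" by force
  have P: "0 < prod u (L - {l0})" using assms by (intro prod_pos) auto
  have Q: "prod u (L - {l0}) \<le> prod v (L - {l0})" using assms by (intro prod_mono) auto
  have "prod u L = u l0 * prod u (L - {l0})" using assms by (simp add: prod.remove)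
  also have "\<dots> < v l0 * prod u (L - {l0})" using lt P by simp
  also have "\<dots> \<le> v l0 * prod v (L - {l0})" using Q lt assms(2,4)
    by (intro mult_left_mono) force+
  also have "\<dots> = prod v L" using assms by (simp add: prod.remove)
  finally show False using assms by simp
qed

lemma sum_eq_each:
  fixes g h :: "'a \<Rightarrow> real"
  assumes "finite S" "\<forall>s\<in>S. g s \<le> h s" "sum g S = sum h S" "s0 \<in> S"
  shows "g s0 = h s0"
  using sum_strict_mono_ex1[of S g h] assms by force

lemma finite_tidx: "finite (tidx m d)"
  by (simp add: tidx_def finite_PiE)

lemma grad_props:
  assumes fnn: "\<forall>j\<in>tidx m d. 0 \<le> f j"
    and pos: "\<forall>j\<in>tidx m d. j k = t \<longrightarrow> f j > 0 \<longrightarrow>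
         (\<forall>l\<in>{..<m}-{k}. 0 < z l (j l) \<and> z l (j l) \<le> w l (j l))"
  shows "0 \<le> mlgrad m d f k z t" "mlgrad m d f k z t \<le> mlgrad m d f k w t"
    "mlgrad m d f k z t = mlgrad m d f k w t \<longleftrightarrow>
      (\<forall>j\<in>tidx m d. j k = t \<longrightarrow> f j > 0 \<longrightarrow> (\<forall>l\<in>{..<m}-{k}. z l (j l) = w l (j l)))"
    "\<And>j. j \<in> tidx m d \<Longrightarrow> j k = t \<Longrightarrow> f j > 0 \<Longrightarrow> 0 < mlgrad m d f k z t"
proof -
  define S where "S = {j\<in>tidx m d. j k = t}"
  define g where "g j = f j * (\<Prod>l\<in>{..<m}-{k}. z l (j l))" for j
  define h where "h j = f j * (\<Prod>l\<in>{..<m}-{k}. w l (j l))" for j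
  have fin: "finite S" unfolding S_def using finite_tidx by simp
  have mg: "mlgrad m d f k z t = sum g S" "mlgrad m d f k w t = sum h S"
    unfolding mlgrad_def S_def g_def h_def by simp_all
  have gpos: "0 < g j" if "j \<in> S" "f j > 0" for j
  proof -
    have "\<forall>l\<in>{..<m}-{k}. 0 < z l (j l)" using that pos unfolding S_def by auto
    then have "0 < (\<Prod>l\<in>{..<m}-{k}. z l (j l))" by (intro prod_pos) auto
    then show ?thesis using that(2) unfolding g_def by simp
  qed
  have g0: "0 \<le> g j" if "j \<in> S" for j
    using gpos[OF that] fnn that unfolding S_def g_def
    by (cases "f j = 0") (auto simp: less_le)
  have gh: "g j \<le> h j" if "j \<in> S" for j
  proof (cases "f j = 0")
    case True then show ?thesis by (simp add: g_def h_def)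
  next
    case False
    then have "f j > 0" using fnn that by (auto simp: S_def less_le)
    then show ?thesis using that pos unfolding g_def h_def S_def
      by (intro mult_left_mono prod_mono) (auto intro: less_imp_le)
  qed
  show "0 \<le> mlgrad m d f k z t" using g0 by (simp add: mg sum_nonneg)
  show "mlgrad m d f k z t \<le> mlgrad m d f k w t" using gh by (simp add: mg sum_mono)
  show "0 < mlgrad m d f k z t" if "j \<in> tidx m d" "j k = t" "f j > 0" for j
  proof -
    have jS: "j \<in> S" using that by (simp add: S_def)
    have "g j \<le> sum g S" using fin jS g0 by (intro member_le_sum) auto
    then show ?thesis using gpos[OF jS that(3)] mg by simp
  qed
  show "mlgrad m d f k z t = mlgrad m d f k w t \<longleftrightarrow>
      (\<forall>j\<in>tidx m d. j k = t \<longrightarrow> f j > 0 \<longrightarrow> (\<forall>l\<in>{..<m}-{k}. z l (j l) = w l (j l)))"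
  proof
    assume eq: "mlgrad m d f k z t = mlgrad m d f k w t"
    show "\<forall>j\<in>tidx m d. j k = t \<longrightarrow> f j > 0 \<longrightarrow> (\<forall>l\<in>{..<m}-{k}. z l (j l) = w l (j l))"
    proof (intro ballI impI)
      fix j l assume j: "j \<in> tidx m d" "j k = t" "f j > 0" and l: "l \<in> {..<m}-{k}"
      have jS: "j \<in> S" using j by (simp add: S_def)
      have "g j = h j" using sum_eq_each[OF fin _ _ jS, of g h] gh eq mg by auto
      then have "(\<Prod>l\<in>{..<m}-{k}. z l (j l)) = (\<Prod>l\<in>{..<m}-{k}. w l (j l))"
        using j(3) by (simp add: g_def h_def)
      then show "z l (j l) = w l (j l)"
        using prod_eq_each[of "{..<m}-{k}" "\<lambda>l. z l (j l)" "\<lambda>l. w l (j l)" l] pos j l by auto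
    qed
  next
    assume H: "\<forall>j\<in>tidx m d. j k = t \<longrightarrow> f j > 0 \<longrightarrow> (\<forall>l\<in>{..<m}-{k}. z l (j l) = w l (j l))"
    have "g j = h j" if "j \<in> S" for j
    proof (cases "f j = 0")
      case True then show ?thesis by (simp add: g_def h_def)
    next
      case False
      then have "f j > 0" using fnn that by (auto simp: S_def less_le)
      then show ?thesis using H that unfolding g_def h_def S_def
        by (intro arg_cong[where f="\<lambda>u. f j * u"] prod.cong) auto
    qed
    then have "sum g S = sum h S" by (intro sum.cong) auto
    then show "mlgrad m d f k z t = mlgrad m d f k w t" using mg by simp
  qed
qed

lemma tidx_lt: "j \<in> tidx m d \<Longrightarrow> l < m \<Longrightarrow> j l < d l"
  by (auto simp: tidx_def PiE_iff)

lemma edge_exists: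
  assumes "weakly_irreducible m d f" "(a,t) \<in> tverts m d" "(b,s) \<in> tverts m d" "a \<noteq> b"
  shows "\<exists>j\<in>tidx m d. j a = t \<and> f j > 0"
proof -
  have "((a,t),(b,s)) \<in> (tedges m d f)\<^sup>*" using assms unfolding weakly_irreducible_def by blast
  then show ?thesis
  proof (cases rule: converse_rtranclE)
    case base then show ?thesis using assms by simp
  next
    case (step w)
    then show ?thesis unfolding tedges_def by auto
  qed
qed

theorem lemma4:
  fixes m :: nat and d :: "nat \<Rightarrow> nat" and f :: "(nat \<Rightarrow> nat) \<Rightarrow> real"
    and p :: "nat \<Rightarrow> real" and i :: nat and x y :: "nat \<Rightarrow> nat \<Rightarrow> real"
  assumes dpos: "\<forall>k<m. 0 < d k"
    and fnn: "\<forall>j\<in>tidx m d. 0 \<le> f j"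
    and irr: "weakly_irreducible m d f"
    and p: "\<forall>k<m. 1 < p k"
    and i: "i < m"
    and xpos: "\<forall>k<m. k \<noteq> i \<longrightarrow> (\<forall>t<d k. 0 < x k t)"
    and xy: "\<forall>k<m. k \<noteq> i \<longrightarrow> (\<forall>t<d k. x k t \<le> y k t)"
    and xney: "\<exists>k<m. k \<noteq> i \<and> (\<exists>t<d k. x k t \<noteq> y k t)"
  defines "J \<equiv> {(\<nu>, t). \<nu> < m \<and> t < d \<nu> \<and>
                 (if \<nu> = i then sigma_map m d f p i x t = sigma_map m d f p i y t
                  else x \<nu> t = y \<nu> t)}"
    and "I \<equiv> {(\<nu>, t). \<nu> < m \<and> t < d \<nu> \<and>
                 (if \<nu> = i then sigma_map m d f p i x t = sigma_map m d f p i y t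
                  else s_map m d f p i \<nu> x t = s_map m d f p i \<nu> y t)}"
  shows "I \<subseteq> J \<and> (J \<noteq> {} \<longrightarrow> I \<noteq> J)"
proof -
  define sx where "sx = sigma_map m d f p i x"
  define sy where "sy = sigma_map m d f p i y"
  define X where "X = x(i := sx)"
  define Y where "Y = y(i := sy)"
  have q: "1 < hconj (p k)" if "k < m" for k using p that hconj_gt1 by auto
  have posi: "\<forall>j\<in>tidx m d. j i = t \<longrightarrow> f j > 0 \<longrightarrow>
         (\<forall>l\<in>{..<m}-{i}. 0 < x l (j l) \<and> x l (j l) \<le> y l (j l))" for t
    using xpos xy tidx_lt by auto
  note Gi = grad_props[OF fnn posi]
  have sxdef: "sx t = psi (hconj (p i)) (mlgrad m d f i x t)" for t by (simp add: sx_def sigma_map_def)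
  have sydef: "sy t = psi (hconj (p i)) (mlgrad m d f i y t)" for t by (simp add: sy_def sigma_map_def)
  have sle: "sx t \<le> sy t" for t using sxdef sydef psi_mono[OF q[OF i]] Gi(1,2) by simp
  have spos: "0 < sx (j i)" if "j \<in> tidx m d" "f j > 0" for j
  proof -
    have "0 < mlgrad m d f i x (j i)" using Gi(4)[OF that(1) refl that(2)] .
    then show ?thesis using sxdef by (simp add: psi_nonneg)
  qed
  have seq: "sx t = sy t \<longleftrightarrow> (\<forall>j\<in>tidx m d. j i = t \<longrightarrow> f j > 0 \<longrightarrow>
      (\<forall>l\<in>{..<m}-{i}. x l (j l) = y l (j l)))" for t
  proof -
    have "sx t = sy t \<longleftrightarrow> mlgrad m d f i x t = mlgrad m d f i y t"
      using sxdef sydef psi_inj[OF q[OF i]] Gi(1) Gi(1)[of t] Gi(2)[of t] by (metis order_trans)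
    then show ?thesis using Gi(3) by simp
  qed
  have sdef: "s_map m d f p i k z t = psi (hconj (p k)) (mlgrad m d f k (z(i := sigma_map m d f p i z)) t)"
    for k z t by (simp add: s_map_def)
  have kprops: "s_map m d f p i k x t = s_map m d f p i k y t \<longleftrightarrow>
      (\<forall>j\<in>tidx m d. j k = t \<longrightarrow> f j > 0 \<longrightarrow> (\<forall>l\<in>{..<m}-{k}. X l (j l) = Y l (j l)))"
    if k: "k < m" "k \<noteq> i" for k t
  proof -
    have posk: "\<forall>j\<in>tidx m d. j k = t \<longrightarrow> f j > 0 \<longrightarrow>
         (\<forall>l\<in>{..<m}-{k}. 0 < X l (j l) \<and> X l (j l) \<le> Y l (j l))"
      using xpos xy tidx_lt spos sle unfolding X_def Y_def by auto
    note Gk = grad_props[OF fnn posk]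
    have "s_map m d f p i k x t = s_map m d f p i k y t \<longleftrightarrow> mlgrad m d f k X t = mlgrad m d f k Y t"
      using sdef[of k x t] sdef[of k y t] psi_inj[OF q[OF k(1)]] Gk(1) Gk(2)
      unfolding X_def Y_def sx_def sy_def by (metis order_trans)
    then show ?thesis using Gk(3) by simp
  qed
  have Jdef: "J = {(\<nu>, t). \<nu> < m \<and> t < d \<nu> \<and> (if \<nu> = i then sx t = sy t else x \<nu> t = y \<nu> t)}"
    unfolding J_def sx_def sy_def ..
  have Idef: "I = {(\<nu>, t). \<nu> < m \<and> t < d \<nu> \<and>
       (if \<nu> = i then sx t = sy t else s_map m d f p i \<nu> x t = s_map m d f p i \<nu> y t)}"
    unfolding I_def sx_def sy_def ..
  have i0: "(i, 0) \<in> tverts m d" using dpos i by (simp add: tverts_def)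
  have IJ: "I \<subseteq> J"
  proof
    fix u assume u: "u \<in> I"
    obtain \<nu> t where ut: "u = (\<nu>, t)" by force
    show "u \<in> J"
    proof (cases "\<nu> = i")
      case True then show ?thesis using u ut Idef Jdef by auto
    next
      case False
      have nt: "\<nu> < m" "t < d \<nu>" and se: "s_map m d f p i \<nu> x t = s_map m d f p i \<nu> y t"
        using u ut Idef False by auto
      obtain j where j: "j \<in> tidx m d" "j \<nu> = t" "f j > 0"
        using edge_exists[OF irr _ i0 False] nt by (auto simp: tverts_def)
      have "X i (j i) = Y i (j i)" using kprops[OF nt(1) False] se j i False by auto
      then have "sx (j i) = sy (j i)" using False by (simp add: X_def Y_def)
      then have "x \<nu> (j \<nu>) = y \<nu> (j \<nu>)" using seq j nt False by auto
      then show ?thesis using ut Jdef nt False j by auto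
    qed
  qed
  moreover have "I \<noteq> J" if Jne: "J \<noteq> {}"
  proof
    assume IeJ: "I = J"
    have clos: "(l, b) \<in> J" if e: "((k, a), (l, b)) \<in> tedges m d f" and kaJ: "(k, a) \<in> J" for k a l b
    proof -
      obtain j where j: "j \<in> tidx m d" "j k = a" "j l = b" "f j > 0" and kl: "k < m" "l < m" "k \<noteq> l"
        using e unfolding tedges_def by auto
      have all: "(l', j l') \<in> J" if l': "l' < m" for l'
      proof (cases "k = i")
        case True
        have "sx a = sy a" using kaJ True Jdef by auto
        then have H: "\<forall>l\<in>{..<m}-{i}. x l (j l) = y l (j l)" using seq j True by auto
        show ?thesis
        proof (cases "l' = i")
          case True2: True
          then show ?thesis using kaJ True j by simp
        next
          case False
          then show ?thesis using H l' tidx_lt[OF j(1) l'] Jdef by auto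
        qed
      next
        case False
        have "(k, a) \<in> I" using kaJ IeJ by simp
        then have "s_map m d f p i k x a = s_map m d f p i k y a" using False Idef by auto
        then have H: "\<forall>l\<in>{..<m}-{k}. X l (j l) = Y l (j l)" using kprops[OF kl(1) False] j by auto
        show ?thesis
        proof (cases "l' = k")
          case True then show ?thesis using kaJ j by simp
        next
          case F2: False
          then have "X l' (j l') = Y l' (j l')" using H l' by auto
          then show ?thesis using F2 l' tidx_lt[OF j(1) l'] Jdef False
            by (cases "l' = i") (auto simp: X_def Y_def)
        qed
      qed
      show ?thesis using all[OF kl(2)] j by simp
    qed
    obtain u where uJ: "u \<in> J" using Jne by auto
    obtain \<nu> t where nt: "\<nu> < m" "\<nu> \<noteq> i" "t < d \<nu>" "x \<nu> t \<noteq> y \<nu> t" using xney by auto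
    have uT: "u \<in> tverts m d" using uJ Jdef by (auto simp: tverts_def)
    have vT: "(\<nu>, t) \<in> tverts m d" using nt by (simp add: tverts_def)
    have "(u, (\<nu>, t)) \<in> (tedges m d f)\<^sup>*" using irr uT vT unfolding weakly_irreducible_def by blast
    then have "(\<nu>, t) \<in> J"
    proof (induction rule: rtrancl_induct)
      case base then show ?case using uJ .
    next
      case (step v w)
      obtain k a where v: "v = (k, a)" by force
      obtain l b where w: "w = (l, b)" by force
      show ?case using clos[of k a l b] step v w by simp
    qed
    then show False using nt Jdef by auto
  qed
  ultimately show ?thesis by blast
qed

end
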